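(* Let $\mathbf{c}\in\mathbb{R}^n$, $\mathcal{K}=\{1,\dots,K\}$, and for each $k\in\mathcal{K}$ let $\mathcal{F}_k=\bigcup_{i\in\mathcal{D}_k}\mathcal{C}_{ki}$ with $\mathcal{D}_k$ finite and each $\mathcal{C}_{ki}\subset\mathbb{R}^n$ compact and convex. Define $$LR_{\mathcal{K}}(\boldsymbol{\lambda}_1,\dots,\boldsymbol{\lambda}_K)=\inf\Big\{\big(\mathbf{c}-\textstyle\sum_{k}\boldsymbol{\lambda}_k\big)^\top\mathbf{x}+\sum_{k}\boldsymbol{\lambda}_k^\top\mathbf{v}_k:\ \mathbf{x}\in\mathbb{R}^n,\ \mathbf{v}_k\in\mathcal{F}_k\ \forall k\Big\}.$$ For a partition $\mathcal{P}=\{\mathcal{J}_1,\dots,\mathcal{J}_P\}$ of $\mathcal{K}$ (nonempty, pairwise disjoint sets with union $\mathcal{K}$) and vectors $\boldsymbol{\mu}_1,\dots,\boldsymbol{\mu}_P\in\mathbb{R}^n$, define the partition relaxation $$L_{\mathcal{P}}(\boldsymbol{\mu}_1,\dots,\boldsymbol{\mu}_P)=\sum_{p=1}^P\min\Big\{\boldsymbol{\mu}_p^\top\mathbf{v}:\ \mathbf{v}\in\textstyle\bigcap_{k\in\mathcal{J}_p}\mathcal{F}_k\Big\}.$$ Then for any vectors $\boldsymbol{\lambda}_1,\dots,\boldsymbol{\lambda}_K\in\mathbb{R}^n$ and any partition $\mathcal{P}$ of $\mathcal{K}$, $$L_{\mathcal{P}}\Big(\sum_{j\in\mathcal{J}_1}\boldsymbol{\lambda}_j,\dots,\sum_{j\in\mathcal{J}_P}\boldsymbol{\lambda}_j\Big)\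 \ge\ LR_{\mathcal{K}}(\boldsymbol{\lambda}_1,\dots,\boldsymbol{\lambda}_K).$$
   Context: Convention: the minimum (infimum) over an empty set is $+\infty$. *)

theory Defs
  imports "HOL-Analysis.Analysis" "HOL-Library.Disjoint_Sets"
begin

text \<open>Lagrangian relaxation value LR_K(lambda_1..lambda_K), valued in extended reals
  (infimum over the empty set is +infinity).\<close>
definition LR :: "'a::euclidean_space \<Rightarrow> (nat \<Rightarrow> 'a set) \<Rightarrow> nat \<Rightarrow> (nat \<Rightarrow> 'a) \<Rightarrow> ereal" where
  "LR c F K lam = Inf {ereal ((c - (\<Sum>k\<in>{1..K}. lam k)) \<bullet> x + (\<Sum>k\<in>{1..K}. lam k \<bullet> v k))
       | x v. \<forall>k\<in>{1..K}. v k \<in> F k}"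

text \<open>Partition relaxation L_P(mu_J for J in P); the min over an empty set is +infinity.\<close>
definition LP :: "(nat \<Rightarrow> 'a::euclidean_space set) \<Rightarrow> nat set set \<Rightarrow> (nat set \<Rightarrow> 'a) \<Rightarrow> ereal" where
  "LP F P mu = (\<Sum>J\<in>P. Inf ((\<lambda>v. ereal (mu J \<bullet> v)) ` (\<Inter>k\<in>J. F k)))"

end

theory Submission
  imports Defs
begin

theorem proposition4:
  fixes c :: "'a::euclidean_space"
    and K :: nat
    and D :: "nat \<Rightarrow> 'b set"
    and C :: "nat \<Rightarrow> 'b \<Rightarrow> 'a set"
    and F :: "nat \<Rightarrow> 'a set"
    and lam :: "nat \<Rightarrow> 'a"
    and P :: "nat set set"
  assumes D_fin: "\<And>k. k \<in> {1..K} \<Longrightarrow> finite (D k)"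
    and C_cpt: "\<And>k i. k \<in> {1..K} \<Longrightarrow> i \<in> D k \<Longrightarrow> compact (C k i)"
    and C_cvx: "\<And>k i. k \<in> {1..K} \<Longrightarrow> i \<in> D k \<Longrightarrow> convex (C k i)"
    and F_def: "\<And>k. k \<in> {1..K} \<Longrightarrow> F k = (\<Union>i\<in>D k. C k i)"
    and part: "partition_on {1..K} P"
  shows "LP F P (\<lambda>J. \<Sum>j\<in>J. lam j) \<ge> LR c F K lam"
proof -
  have U: "\<Union>P = {1..K}" using partition_onD1[OF part] by simp
  have finP: "finite P" using U finite_UnionD by (metis finite_atLeastAtMost)
  have ne: "\<And>J. J \<in> P \<Longrightarrow> J \<noteq> {}" using partition_onD3[OF part] by auto
  have sub: "\<And>J. J \<in> P \<Longrightarrow> J \<subseteq> {1..K}" using U by auto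
  have finJ: "\<And>J. J \<in> P \<Longrightarrow> finite J" using sub finite_subset by blast
  have disj: "\<And>A B. A \<in> P \<Longrightarrow> B \<in> P \<Longrightarrow> A \<noteq> B \<Longrightarrow> A \<inter> B = {}"
    using partition_onD2[OF part] unfolding disjoint_def by blast
  have Fc: "\<And>k. k \<in> {1..K} \<Longrightarrow> compact (F k)"
    using F_def D_fin C_cpt by (metis compact_UN)
  define S where "S J = (\<Inter>k\<in>J. F k)" for J
  have Sc: "\<And>J. J \<in> P \<Longrightarrow> compact (S J)"
    unfolding S_def using Fc sub ne by (intro compact_Inter) (auto, meson atLeastAtMost_iff subsetD)
  show ?thesis
  proof (cases "\<exists>J\<in>P. S J = {}")
    case True
    then obtain J where J: "J \<in> P" "S J = {}" by blast
    have "LP F P (\<lambda>J. \<Sum>j\<in>J. lam j) = \<infinity>"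
      unfolding LP_def sum_Pinfty using finP J unfolding S_def
      by (intro conjI bexI[of _ J]) (auto simp: top_ereal_def)
    then show ?thesis by simp
  next
    case False
    have "\<forall>J\<in>P. \<exists>w\<in>S J. \<forall>y\<in>S J. (\<Sum>j\<in>J. lam j) \<bullet> w \<le> (\<Sum>j\<in>J. lam j) \<bullet> y"
    proof
      fix J assume "J \<in> P"
      then show "\<exists>w\<in>S J. \<forall>y\<in>S J. (\<Sum>j\<in>J. lam j) \<bullet> w \<le> (\<Sum>j\<in>J. lam j) \<bullet> y"
        using False Sc by (intro continuous_attains_inf) (auto intro!: continuous_intros)
    qed
    then obtain w where w: "\<And>J. J \<in> P \<Longrightarrow> w J \<in> S J"
      "\<And>J y. J \<in> P \<Longrightarrow> y \<in> S J \<Longrightarrow> (\<Sum>j\<in>J. lam j) \<bullet> w J \<le> (\<Sum>j\<in>J. lam j) \<bullet> y"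
      by metis
    have inf: "Inf ((\<lambda>v. ereal ((\<Sum>j\<in>J. lam j) \<bullet> v)) ` (\<Inter>k\<in>J. F k)) = ereal ((\<Sum>j\<in>J. lam j) \<bullet> w J)"
      if "J \<in> P" for J
    proof (rule antisym)
      show "Inf ((\<lambda>v. ereal ((\<Sum>j\<in>J. lam j) \<bullet> v)) ` (\<Inter>k\<in>J. F k)) \<le> ereal ((\<Sum>j\<in>J. lam j) \<bullet> w J)"
        using w(1)[OF that] unfolding S_def by (intro INF_lower) auto
      show "ereal ((\<Sum>j\<in>J. lam j) \<bullet> w J) \<le> Inf ((\<lambda>v. ereal ((\<Sum>j\<in>J. lam j) \<bullet> v)) ` (\<Inter>k\<in>J. F k))"
        using w(2)[OF that] unfolding S_def by (intro INF_greatest) auto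
    qed
    have LPe: "LP F P (\<lambda>J. \<Sum>j\<in>J. lam j) = ereal (\<Sum>J\<in>P. (\<Sum>j\<in>J. lam j) \<bullet> w J)"
      unfolding LP_def using inf by simp
    define v where "v k = w (SOME J. J \<in> P \<and> k \<in> J)" for k
    have vJ: "v k = w J" if "J \<in> P" "k \<in> J" for J k
    proof -
      have "\<exists>J. J \<in> P \<and> k \<in> J" using that by blast
      then have "(SOME J. J \<in> P \<and> k \<in> J) \<in> P \<and> k \<in> (SOME J. J \<in> P \<and> k \<in> J)"
        by (rule someI_ex)
      then have "(SOME J. J \<in> P \<and> k \<in> J) = J" using disj that by blast
      then show ?thesis unfolding v_def by simp
    qed
    have vF: "\<forall>k\<in>{1..K}. v k \<in> F k"
    proof
      fix k assume "k \<in> {1..K}"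
      then obtain J where "J \<in> P" "k \<in> J" using U by blast
      then show "v k \<in> F k" using vJ w(1) unfolding S_def by auto
    qed
    have "(\<Sum>k\<in>{1..K}. lam k \<bullet> v k) = (\<Sum>J\<in>P. \<Sum>k\<in>J. lam k \<bullet> v k)"
      unfolding U[symmetric] using finJ disj by (subst sum.Union_disjoint) auto
    also have "\<dots> = (\<Sum>J\<in>P. (\<Sum>j\<in>J. lam j) \<bullet> w J)"
      using vJ by (intro sum.cong refl) (simp add: inner_sum_left)
    finally have eq: "(\<Sum>k\<in>{1..K}. lam k \<bullet> v k) = (\<Sum>J\<in>P. (\<Sum>j\<in>J. lam j) \<bullet> w J)" .
    have "LR c F K lam \<le> ereal ((c - (\<Sum>k\<in>{1..K}. lam k)) \<bullet> 0 + (\<Sum>k\<in>{1..K}. lam k \<bullet> v k))"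
      unfolding LR_def using vF by (intro Inf_lower) blast
    then show ?thesis using LPe eq by simp
  qed
qed

end
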